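(* Let $\mathcal{G}=(V,E_L,E_R)$ and $\mathcal{G}'=(V',E'_L,E'_R)$ be achievement positional games with $V\cap V'=\varnothing$. Suppose Left has a winning strategy on $\mathcal{G}$ as first player and Right has a winning strategy on $\mathcal{G}'$ as first player. Let $d$ be the Left-delay of $\mathcal{G}$ and $d'$ the Right-delay of $\mathcal{G}'$. If $d\le d'$, then Left has a winning strategy on $\mathcal{G}\cup\mathcal{G}'$ as first player; if $d'\le d$, then Right has a winning strategy on $\mathcal{G}\cup\mathcal{G}'$ as first player. In particular, at least one of Left and Right has a winning strategy as first player on $\mathcal{G}\cup\mathcal{G}'$.
   Context: A hypergraph is a pair $(V,E)$ with $V$ finite and $E\subseteq 2^V\setminus\{\varnothing\}$. An achievement positional game is a triple $\mathcal{G}=(V,E_L,E_R)$ where $(V,E_L)$ and $(V,E_R)$ are hypergraphs; elements of $E_L$ are blue edges, elements of $E_R$ are red edges. Two players, Left and Right, alternately pick a previously unpicked vertex of $V$ (either player may be designated to start). A player fills an edge when they have picked all its vertices. If Left fills a blue edge before Right fills a red edge, Left wins; if Right fills a red edge before Left fills a blue edge, Right wins; if neither happens before all vertices are picked, the game is a draw. The disjoint union of games with disjoint vertex sets is $\mathcal{G}\cup\mathcal{G}'=(V\cup V',E_L\cup E'_L,E_R\cup E'_R)$. Left-delay: if Left has a winning strategy on $\mathcal{G}$ as first player, consider the scoring game in which Left moves first and plays normally, while Right, on each of her turns, may either pick an unpicked vertex or pass. The game ends when Left fills a blue edge, Right fills a red edge, or all vertices are picked. The score is $+\infty$ if Left has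 not filled a blue edge, and otherwise the total number of passes made by Right. Left minimizes and Right maximizes the score; the Left-delay of $\mathcal{G}$ is the value of this game under optimal play (finite under the hypothesis). The Right-delay of a game on which Right has a winning strategy as first player is defined symmetrically (roles of Left/Right and blue/red swapped). *)

theory Defs
  imports Main "HOL-Library.Extended_Nat"
begin

definition hypergraph :: "'a set \<Rightarrow> 'a set set \<Rightarrow> bool" where
  "hypergraph V E \<longleftrightarrow> finite V \<and> (\<forall>e\<in>E. e \<subseteq> V \<and> e \<noteq> {})"

definition fills :: "'a set set \<Rightarrow> 'a set \<Rightarrow> bool" where
  "fills E A \<longleftrightarrow> (\<exists>e\<in>E. e \<subseteq> A)"

text \<open>Positions: A = vertices picked by Left, B = vertices picked by Right,
  the boolean says whether it is Left's turn.
  lwins V EL ER A B t : Left can force a win (fill a blue edge before Right fills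
  a red edge) from this position.\<close>
inductive lwins :: "'a set \<Rightarrow> 'a set set \<Rightarrow> 'a set set \<Rightarrow> 'a set \<Rightarrow> 'a set \<Rightarrow> bool \<Rightarrow> bool"
  for V EL ER where
  base: "fills EL A \<Longrightarrow> \<not> fills ER B \<Longrightarrow> lwins V EL ER A B t"
| left_move: "\<not> fills EL A \<Longrightarrow> \<not> fills ER B \<Longrightarrow> v \<in> V - A - B \<Longrightarrow>
     lwins V EL ER (insert v A) B False \<Longrightarrow> lwins V EL ER A B True"
| right_move: "\<not> fills EL A \<Longrightarrow> \<not> fills ER B \<Longrightarrow> V - A - B \<noteq> {} \<Longrightarrow>
     (\<forall>v \<in> V - A - B. lwins V EL ER A (insert v B) True) \<Longrightarrow> lwins V EL ER A B False"

definition left_first_wins :: "'a set \<Rightarrow> 'a set set \<Rightarrow> 'a set set \<Rightarrow> bool" where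
  "left_first_wins V EL ER \<longleftrightarrow> lwins V EL ER {} {} True"

definition right_first_wins :: "'a set \<Rightarrow> 'a set set \<Rightarrow> 'a set set \<Rightarrow> bool" where
  "right_first_wins V EL ER \<longleftrightarrow> lwins V ER EL {} {} True"

text \<open>Delay scoring game: ldelay_le V EL ER A B t k means Left (moving normally,
  Right may pick or pass) can force that Left fills a blue edge (before Right fills a
  red edge and before all vertices are picked) with at most k further passes by Right,
  i.e. Left can guarantee a score \<le> (passes so far) + k.\<close>
inductive ldelay_le :: "'a set \<Rightarrow> 'a set set \<Rightarrow> 'a set set \<Rightarrow> 'a set \<Rightarrow> 'a set \<Rightarrow> bool \<Rightarrow> nat \<Rightarrow> bool"
  for V EL ER where
  base: "fills EL A \<Longrightarrow> \<not> fills ER B \<Longrightarrow> ldelay_le V EL ER A B t k"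
| left_move: "\<not> fills EL A \<Longrightarrow> \<not> fills ER B \<Longrightarrow> v \<in> V - A - B \<Longrightarrow>
     ldelay_le V EL ER (insert v A) B False k \<Longrightarrow> ldelay_le V EL ER A B True k"
| right_move: "\<not> fills EL A \<Longrightarrow> \<not> fills ER B \<Longrightarrow> V - A - B \<noteq> {} \<Longrightarrow>
     (\<forall>v \<in> V - A - B. ldelay_le V EL ER A (insert v B) True k) \<Longrightarrow>
     ldelay_le V EL ER A B True (k - 1) \<Longrightarrow> k > 0 \<Longrightarrow>
     ldelay_le V EL ER A B False k"

text \<open>Left-delay: value of the scoring game (Left minimises, Right maximises),
  i.e. the least score Left can guarantee; \<infinity> if none.\<close>
definition left_delay :: "'a set \<Rightarrow> 'a set set \<Rightarrow> 'a set set \<Rightarrow> enat" where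
  "left_delay V EL ER = Inf {enat k | k. ldelay_le V EL ER {} {} True k}"

definition right_delay :: "'a set \<Rightarrow> 'a set set \<Rightarrow> 'a set set \<Rightarrow> enat" where
  "right_delay V EL ER = left_delay V ER EL"

end

theory Submission
  imports Defs
begin


lemma fills_mono: "fills E X \<Longrightarrow> X \<subseteq> Y \<Longrightarrow> fills E Y"
  unfolding fills_def by blast

lemma ld_mono: "ldelay_le V EL ER A B t k \<Longrightarrow> k \<le> k' \<Longrightarrow> ldelay_le V EL ER A B t k'"
proof (induction arbitrary: k' rule: ldelay_le.induct)
  case (base A B t k)
  then show ?case by (simp add: ldelay_le.base)
next
  case (left_move A B v k)
  have "ldelay_le V EL ER (insert v A) B False k'" by (rule left_move.IH[OF left_move.prems])
  then show ?case by (rule ldelay_le.left_move[OF left_move.hyps(1,2,3)])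
next
  case (right_move A B k)
  have all: "\<forall>v\<in>V - A - B. ldelay_le V EL ER A (insert v B) True k'"
  proof
    fix v assume v: "v \<in> V - A - B"
    have "\<forall>x\<ge>k. ldelay_le V EL ER A (insert v B) True x" using right_move.IH(1) v by blast
    then show "ldelay_le V EL ER A (insert v B) True k'" using right_move.prems by blast
  qed
  have le: "k - 1 \<le> k' - 1" using right_move.prems by simp
  have pass: "ldelay_le V EL ER A B True (k' - 1)" by (rule right_move.IH(2)[OF le])
  have pos: "0 < k'" using right_move.prems right_move.hyps(5) by simp
  show ?case by (rule ldelay_le.right_move[OF right_move.hyps(1,2,3) all pass pos])
qed

lemma ld_noR: "ldelay_le V EL ER A B t k \<Longrightarrow> \<not> fills ER B"
  by (erule ldelay_le.cases) auto

lemma lw_fillsV: "lwins V EL ER A B t \<Longrightarrow> A \<subseteq> V - B \<Longrightarrow> fills EL (V - B)"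
proof (induction rule: lwins.induct)
  case (base A B t)
  then show ?case using fills_mono by blast
next
  case (left_move A B v)
  have "insert v A \<subseteq> V - B" using left_move.hyps(3) left_move.prems by blast
  then show ?case by (rule left_move.IH)
next
  case (right_move A B)
  obtain w where w: "w \<in> V - A - B" using right_move.hyps(3) by blast
  have I: "A \<subseteq> V - insert w B \<longrightarrow> fills EL (V - insert w B)" using right_move.IH w by blast
  have "A \<subseteq> V - insert w B" using right_move.prems w by blast
  with I have "fills EL (V - insert w B)" by blast
  then show ?case using fills_mono by blast
qed

lemma lw_mono: "lwins V EL ER A B t \<Longrightarrow> A \<subseteq> A2 \<Longrightarrow> A2 \<subseteq> V - B \<Longrightarrow> lwins V EL ER A2 B t"
proof (induction arbitrary: A2 rule: lwins.induct)
  case (base A B t)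
  then show ?case using fills_mono lwins.base by blast
next
  case (left_move A B v)
  have nR: "\<not> fills ER B" by (rule left_move.hyps(2))
  show ?case
  proof (cases "fills EL A2")
    case True then show ?thesis using nR by (rule lwins.base)
  next
    case nf: False
    show ?thesis
    proof (cases "v \<in> A2")
      case False
      have vA: "v \<in> V - A2 - B" using left_move.hyps(3) left_move.prems False by blast
      have s1: "insert v A \<subseteq> insert v A2" using left_move.prems(1) by blast
      have s2: "insert v A2 \<subseteq> V - B" using left_move.prems(2) vA by blast
      have "lwins V EL ER (insert v A2) B False" by (rule left_move.IH[OF s1 s2])
      then show ?thesis by (rule lwins.left_move[OF nf nR vA])
    next
      case True
      have s0: "insert v A \<subseteq> V - B" using left_move.hyps(3) left_move.prems by blast
      have "fills EL (V - B)" by (rule lw_fillsV[OF left_move.hyps(4) s0])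
      then obtain x where x: "x \<in> V - A2 - B" using nf fills_mono by blast
      have s1: "insert v A \<subseteq> insert x A2" using left_move.prems(1) True by blast
      have s2: "insert x A2 \<subseteq> V - B" using left_move.prems(2) x by blast
      have "lwins V EL ER (insert x A2) B False" by (rule left_move.IH[OF s1 s2])
      then show ?thesis by (rule lwins.left_move[OF nf nR x])
    qed
  qed
next
  case (right_move A B)
  have nR: "\<not> fills ER B" by (rule right_move.hyps(2))
  show ?case
  proof (cases "fills EL A2")
    case True then show ?thesis using nR by (rule lwins.base)
  next
    case False
    obtain w where w: "w \<in> V - A - B" using right_move.hyps(3) by blast
    have Lw: "lwins V EL ER A (insert w B) True" using right_move.IH w by simp
    have sw: "A \<subseteq> V - insert w B" using right_move.prems w by blast
    have "fills EL (V - insert w B)" by (rule lw_fillsV[OF Lw sw])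
    then have "fills EL (V - B)" using fills_mono by blast
    then have ne: "V - A2 - B \<noteq> {}" using False fills_mono by blast
    have all: "\<forall>v\<in>V - A2 - B. lwins V EL ER A2 (insert v B) True"
    proof
      fix v assume v: "v \<in> V - A2 - B"
      have vA: "v \<in> V - A - B" using v right_move.prems by blast
      have s2: "A2 \<subseteq> V - insert v B" using v right_move.prems by blast
      have "\<forall>x. A \<subseteq> x \<longrightarrow> x \<subseteq> V - insert v B \<longrightarrow> lwins V EL ER x (insert v B) True"
        using right_move.IH vA by blast
      then show "lwins V EL ER A2 (insert v B) True"
        using right_move.prems(1) s2 by blast
    qed
    show ?thesis by (rule lwins.right_move[OF False nR ne all])
  qed
qed

lemma lw_extra:
  assumes L: "lwins V EL ER A B False" and S: "A \<subseteq> V - B"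
  shows "lwins V EL ER A B True"
  using L
proof (cases rule: lwins.cases)
  case base then show ?thesis by (simp add: lwins.base)
next
  case right_move
  obtain x where x: "x \<in> V - A - B" using right_move(3) by blast
  have s: "insert x A \<subseteq> V - B" using x S by blast
  have "lwins V EL ER (insert x A) B False" by (rule lw_mono[OF L _ s]) blast
  then show ?thesis by (rule lwins.left_move[OF right_move(1,2) x])
qed simp

lemma card_ins_less: "finite X \<Longrightarrow> x \<in> X - Y - Z \<Longrightarrow> card (X - Y - insert x Z) < card (X - Y - Z)"
  by (rule psubset_card_mono) auto

lemma card_ins_less2: "finite X \<Longrightarrow> x \<in> X - Y - Z \<Longrightarrow> card (X - insert x Y - Z) < card (X - Y - Z)"
  by (rule psubset_card_mono) auto

lemma lw_delay_fin_aux: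
  assumes "finite V"
  shows "card (V - A - B) = n \<Longrightarrow> A \<subseteq> V - B \<Longrightarrow> lwins V EL ER A B t \<Longrightarrow> \<exists>k. ldelay_le V EL ER A B t k"
proof (induction n arbitrary: A B t rule: less_induct)
  case (less n A B t)
  have S: "A \<subseteq> V - B" by (rule less.prems(2))
  have cn: "card (V - A - B) = n" by (rule less.prems(1))
  have T: "\<exists>k. ldelay_le V EL ER A B True k" if L: "lwins V EL ER A B True"
    using L
  proof (cases rule: lwins.cases)
    case base then show ?thesis using ldelay_le.base by blast
  next
    case (left_move v)
    have lt: "card (V - insert v A - B) < n" using card_ins_less2[OF assms left_move(3)] cn by simp
    have s: "insert v A \<subseteq> V - B" using left_move(3) S by blast
    obtain k where "ldelay_le V EL ER (insert v A) B False k"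
      using less.IH[OF lt refl s left_move(4)] by blast
    then have "ldelay_le V EL ER A B True k" by (rule ldelay_le.left_move[OF left_move(1,2,3)])
    then show ?thesis by blast
  qed simp
  show ?case
  proof (cases t)
    case True then show ?thesis using T less.prems(3) by simp
  next
    case False
    with less.prems(3) have L: "lwins V EL ER A B False" by simp
    from L show ?thesis
    proof (cases rule: lwins.cases)
      case base then show ?thesis using ldelay_le.base by blast
    next
      case right_move
      have ex: "\<forall>w\<in>V - A - B. \<exists>k. ldelay_le V EL ER A (insert w B) True k"
      proof
        fix w assume w: "w \<in> V - A - B"
        have lt: "card (V - A - insert w B) < n" using card_ins_less[OF assms w] cn by simp
        have s: "A \<subseteq> V - insert w B" using w S by blast
        have Lw: "lwins V EL ER A (insert w B) True" using right_move(4) w by blast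
        show "\<exists>k. ldelay_le V EL ER A (insert w B) True k"
          by (rule less.IH[OF lt refl s Lw])
      qed
      obtain f where f: "\<forall>w\<in>V - A - B. ldelay_le V EL ER A (insert w B) True (f w)"
        using bchoice[OF ex] by blast
      obtain k0 where k0: "ldelay_le V EL ER A B True k0"
        using T[OF lw_extra[OF L S]] by blast
      define K where "K = sum f (V - A - B) + k0 + 1"
      have fin: "finite (V - A - B)" using assms by simp
      have all: "\<forall>v\<in>V - A - B. ldelay_le V EL ER A (insert v B) True K"
      proof
        fix v assume v: "v \<in> V - A - B"
        have "f v \<le> sum f (V - A - B)" by (rule member_le_sum[OF v _ fin]) simp
        then have "f v \<le> K" unfolding K_def by simp
        then show "ldelay_le V EL ER A (insert v B) True K" using f v ld_mono by blast
      qed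
      have pass: "ldelay_le V EL ER A B True (K - 1)" using ld_mono[OF k0] unfolding K_def by simp
      have pos: "0 < K" unfolding K_def by simp
      have "ldelay_le V EL ER A B False K"
        by (rule ldelay_le.right_move[OF right_move(1,2,3) all pass pos])
      then have "\<exists>k. ldelay_le V EL ER A B False k" by blast
      then show ?thesis using False by simp
    qed simp
  qed
qed

lemma lw_delay_fin:
  assumes "finite V" "lwins V EL ER {} {} True"
  shows "\<exists>k. ldelay_le V EL ER {} {} True k"
proof -
  have s: "{} \<subseteq> V - {}" by simp
  show ?thesis by (rule lw_delay_fin_aux[OF assms(1) refl s assms(2)])
qed

lemma delay_attained:
  assumes "\<exists>k. ldelay_le V EL ER {} {} True k"
  shows "\<exists>k0. ldelay_le V EL ER {} {} True k0 \<and> left_delay V EL ER = enat k0"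
proof -
  let ?S = "{enat k | k. ldelay_le V EL ER {} {} True k}"
  have ne: "?S \<noteq> {}" using assms by blast
  have e1: "Inf ?S = (LEAST x. x \<in> ?S)" unfolding Inf_enat_def by (rule if_not_P[OF ne])
  have ex: "\<exists>x. x \<in> ?S" using ne by blast
  have "(LEAST x. x \<in> ?S) \<in> ?S" using ex by (rule LeastI_ex)
  then have "Inf ?S \<in> ?S" by (simp only: e1)
  then obtain k0 where "Inf ?S = enat k0" "ldelay_le V EL ER {} {} True k0" by blast
  then show ?thesis unfolding left_delay_def by blast
qed

lemma delay_le:
  assumes "ldelay_le V EL ER {} {} True j"
  shows "left_delay V EL ER \<le> enat j"
proof -
  have "enat j \<in> {enat k | k. ldelay_le V EL ER {} {} True k}" using assms by blast
  then show ?thesis unfolding left_delay_def by (rule Inf_lower)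
qed



lemma fills_union:
  "\<forall>e\<in>E. e \<subseteq> V \<Longrightarrow> \<forall>e\<in>E'. e \<subseteq> V' \<Longrightarrow> V \<inter> V' = {} \<Longrightarrow> A \<subseteq> V \<Longrightarrow> A' \<subseteq> V' \<Longrightarrow>
   fills (E \<union> E') (A \<union> A') = (fills E A \<or> fills E' A')"
proof -
  assume a1: "\<forall>e\<in>E. e \<subseteq> V" and a2: "\<forall>e\<in>E'. e \<subseteq> V'" and a3: "V \<inter> V' = {}"
    and a4: "A \<subseteq> V" and a5: "A' \<subseteq> V'"
  have 1: "e \<subseteq> A" if e: "e \<in> E" "e \<subseteq> A \<union> A'" for e
  proof
    fix x assume x: "x \<in> e"
    have xV: "x \<in> V" using a1 e x by auto
    have "x \<notin> A'" using xV a3 a5 by auto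
    then show "x \<in> A" using e x by auto
  qed
  have 2: "e \<subseteq> A'" if e: "e \<in> E'" "e \<subseteq> A \<union> A'" for e
  proof
    fix x assume x: "x \<in> e"
    have xV: "x \<in> V'" using a2 e x by auto
    have "x \<notin> A" using xV a3 a4 by auto
    then show "x \<in> A'" using e x by auto
  qed
  show ?thesis
  proof
    assume "fills (E \<union> E') (A \<union> A')"
    then obtain e where e: "e \<in> E \<union> E'" "e \<subseteq> A \<union> A'" unfolding fills_def by auto
    show "fills E A \<or> fills E' A'"
    proof (cases "e \<in> E")
      case True
      have "e \<subseteq> A" by (rule 1[OF True e(2)])
      then show ?thesis using True unfolding fills_def by blast
    next
      case False then have eE: "e \<in> E'" using e by auto
      have "e \<subseteq> A'" by (rule 2[OF eE e(2)])
      then show ?thesis using eE unfolding fills_def by blast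
    qed
  next
    assume "fills E A \<or> fills E' A'"
    then show "fills (E \<union> E') (A \<union> A')" unfolding fills_def by auto
  qed
qed

context
  fixes V V' :: "'a set" and EL ER EL' ER' :: "'a set set"
  assumes hL: "hypergraph V EL" and hR: "hypergraph V ER"
    and hL': "hypergraph V' EL'" and hR': "hypergraph V' ER'"
    and disj: "V \<inter> V' = {}"
begin

definition "Q1 A B A' B' \<longleftrightarrow> (\<forall>k. ldelay_le V EL ER A B True k \<longrightarrow> (\<forall>j<k. \<not> ldelay_le V' ER' EL' B' A' True j) \<longrightarrow>
        lwins (V \<union> V') (EL \<union> EL') (ER \<union> ER') (A \<union> A') (B \<union> B') True)"
definition "Q2 A B A' B' \<longleftrightarrow> (\<forall>k. ldelay_le V EL ER A B False k \<longrightarrow> (\<forall>j<k. \<not> ldelay_le V' ER' EL' B' A' True j) \<longrightarrow>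
        lwins (V \<union> V') (EL \<union> EL') (ER \<union> ER') (A \<union> A') (B \<union> B') False)"
definition "Q3 A B A' B' \<longleftrightarrow> (\<forall>k. ldelay_le V EL ER A B False k \<longrightarrow> (\<forall>j<k. \<not> ldelay_le V' ER' EL' B' A' False j) \<longrightarrow>
        lwins (V \<union> V') (EL \<union> EL') (ER \<union> ER') (A \<union> A') (B \<union> B') True)"

definition "WF A B A' B' \<longleftrightarrow> A \<subseteq> V \<and> B \<subseteq> V \<and> A \<inter> B = {} \<and> A' \<subseteq> V' \<and> B' \<subseteq> V' \<and> A' \<inter> B' = {} \<and> \<not> fills ER' B'"

lemma core:
  "card ((V \<union> V') - (A \<union> A') - (B \<union> B')) = n \<Longrightarrow> WF A B A' B' \<Longrightarrow>
   Q1 A B A' B' \<and> Q2 A B A' B' \<and> Q3 A B A' B'"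
proof (induction n arbitrary: A B A' B' rule: less_induct)
  case (less n A B A' B')
  let ?U = "lwins (V \<union> V') (EL \<union> EL') (ER \<union> ER')"
  let ?R = "ldelay_le V' ER' EL'"
  have IH: "Q1 A2 B2 A2' B2' \<and> Q2 A2 B2 A2' B2' \<and> Q3 A2 B2 A2' B2'"
    if "card ((V \<union> V') - (A2 \<union> A2') - (B2 \<union> B2')) < n" "WF A2 B2 A2' B2'" for A2 B2 A2' B2'
    using less.IH[OF that(1) refl that(2)] .
  have cn: "card ((V \<union> V') - (A \<union> A') - (B \<union> B')) = n" by (rule less.prems(1))
  have wf: "WF A B A' B'" by (rule less.prems(2))
  then have AV: "A \<subseteq> V" and BV: "B \<subseteq> V" and AB: "A \<inter> B = {}" and AV': "A' \<subseteq> V'"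
    and BV': "B' \<subseteq> V'" and AB': "A' \<inter> B' = {}" and H: "\<not> fills ER' B'"
    unfolding WF_def by auto
  have fin: "finite (V \<union> V')" using hL hL' by (auto simp: hypergraph_def)
  have fr: "(V \<union> V') - (A \<union> A') - (B \<union> B') = (V - A - B) \<union> (V' - A' - B')"
    using disj AV BV AV' BV' by auto
  have blue: "\<And>A A'. A \<subseteq> V \<Longrightarrow> A' \<subseteq> V' \<Longrightarrow> fills (EL \<union> EL') (A \<union> A') = (fills EL A \<or> fills EL' A')"
    by (rule fills_union) (use hL hL' disj in \<open>auto simp: hypergraph_def\<close>)
  have red: "\<And>B B'. B \<subseteq> V \<Longrightarrow> B' \<subseteq> V' \<Longrightarrow> fills (ER \<union> ER') (B \<union> B') = (fills ER B \<or> fills ER' B')"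
    by (rule fills_union) (use hR hR' disj in \<open>auto simp: hypergraph_def\<close>)
  have blue0: "fills (EL \<union> EL') (A \<union> A') = (fills EL A \<or> fills EL' A')" using blue AV AV' by simp
  have red0: "\<not> fills (ER \<union> ER') (B \<union> B')" if "\<not> fills ER B" using red BV BV' H that by simp
  have win: "?U (A \<union> A') (B \<union> B') t" if "fills EL A \<or> fills EL' A'" "\<not> fills ER B" for t
    using lwins.base[of "EL \<union> EL'" "A \<union> A'" "ER \<union> ER'" "B \<union> B'"] blue0 red0 that by blast
  have P2: "Q2 A B A' B'"
    unfolding Q2_def
  proof (intro allI impI)
    fix k assume D: "ldelay_le V EL ER A B False k" and G: "\<forall>j<k. \<not> ?R B' A' True j"
    from D show "?U (A \<union> A') (B \<union> B') False"
    proof (cases rule: ldelay_le.cases)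
      case base then show ?thesis using win by blast
    next
      case right_move
      show ?thesis
      proof (cases "fills EL' A'")
        case True then show ?thesis using win right_move by blast
      next
        case False
        show ?thesis
        proof (rule lwins.right_move)
          show "\<not> fills (EL \<union> EL') (A \<union> A')" using blue0 False right_move by simp
          show "\<not> fills (ER \<union> ER') (B \<union> B')" using red0 right_move by simp
          show "(V \<union> V') - (A \<union> A') - (B \<union> B') \<noteq> {}" using fr right_move by auto
          show "\<forall>v\<in>(V \<union> V') - (A \<union> A') - (B \<union> B'). ?U (A \<union> A') (insert v (B \<union> B')) True"
          proof
            fix w assume w: "w \<in> (V \<union> V') - (A \<union> A') - (B \<union> B')"
            have lt: "card ((V \<union> V') - (A \<union> A') - (insert w B \<union> B')) < n"
              using card_ins_less[OF fin w] cn by simp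
            have lt': "card ((V \<union> V') - (A \<union> A') - (B \<union> insert w B')) < n"
              using card_ins_less[OF fin w] cn by simp
            from w fr have "w \<in> V - A - B \<or> w \<in> V' - A' - B'" by auto
            then show "?U (A \<union> A') (insert w (B \<union> B')) True"
            proof
              assume wG: "w \<in> V - A - B"
              have D': "ldelay_le V EL ER A (insert w B) True k" using right_move wG by blast
              have "WF A (insert w B) A' B'" using wf wG unfolding WF_def by auto
              then have "Q1 A (insert w B) A' B'" using IH[OF lt] by blast
              then have "?U (A \<union> A') (insert w B \<union> B') True"
                using D' G unfolding Q1_def by blast
              then show ?thesis by simp
            next
              assume wG': "w \<in> V' - A' - B'"
              have nf: "\<not> fills ER' (insert w B')"
              proof
                assume f: "fills ER' (insert w B')"
                have "?R (insert w B') A' False 0" using f False by (rule ldelay_le.base)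
                then have "?R B' A' True 0"
                  using H False wG' by (intro ldelay_le.left_move[where v=w]) auto
                then show False using G right_move by blast
              qed
              have G': "\<forall>j<k. \<not> ?R (insert w B') A' False j"
              proof (intro allI impI notI)
                fix j assume j: "j < k" and r: "?R (insert w B') A' False j"
                have "?R B' A' True j"
                  using H False wG' r by (intro ldelay_le.left_move[where v=w]) auto
                then show False using G j by blast
              qed
              have "WF A B A' (insert w B')" using wf wG' nf unfolding WF_def by auto
              then have "Q3 A B A' (insert w B')" using IH[OF lt'] by blast
              then have "?U (A \<union> A') (B \<union> insert w B') True"
                using D G' unfolding Q3_def by blast
              then show ?thesis by simp
            qed
          qed
        qed
      qed
    qed simp
  qed
  have P1: "Q1 A B A' B'"
    unfolding Q1_def
  proof (intro allI impI)
    fix k assume D: "ldelay_le V EL ER A B True k" and G: "\<forall>j<k. \<not> ?R B' A' True j"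
    from D show "?U (A \<union> A') (B \<union> B') True"
    proof (cases rule: ldelay_le.cases)
      case base then show ?thesis using win by blast
    next
      case (left_move v)
      show ?thesis
      proof (cases "fills EL' A'")
        case True then show ?thesis using win left_move by blast
      next
        case False
        have vU: "v \<in> (V \<union> V') - (A \<union> A') - (B \<union> B')" using fr left_move by auto
        have lt: "card ((V \<union> V') - (insert v A \<union> A') - (B \<union> B')) < n"
          using card_ins_less2[OF fin vU] cn by simp
        have "WF (insert v A) B A' B'" using wf left_move unfolding WF_def by auto
        then have "Q2 (insert v A) B A' B'" using IH[OF lt] by blast
        then have "?U (insert v A \<union> A') (B \<union> B') False"
          using left_move G unfolding Q2_def by blast
        then have "?U (insert v (A \<union> A')) (B \<union> B') False" by simp
        then show ?thesis
          using blue0 red0 False left_move vU by (intro lwins.left_move[where v=v]) auto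
      qed
    qed simp
  qed
  have P3: "Q3 A B A' B'"
    unfolding Q3_def
  proof (intro allI impI)
    fix k assume D: "ldelay_le V EL ER A B False k" and G: "\<forall>j<k. \<not> ?R B' A' False j"
    from D show "?U (A \<union> A') (B \<union> B') True"
    proof (cases rule: ldelay_le.cases)
      case base then show ?thesis using win by blast
    next
      case right_move
      show ?thesis
      proof (cases "fills EL' A'")
        case True then show ?thesis using win right_move by blast
      next
        case False
        show ?thesis
        proof (cases "\<forall>j<k - 1. \<not> ?R B' A' True j")
          case True
          have "ldelay_le V EL ER A B True (k - 1)" using right_move by blast
          then show ?thesis using P1 True unfolding Q1_def by blast
        next
          case NP: False
          show ?thesis
          proof (cases "\<exists>u\<in>V' - B' - A'. \<not> ?R B' (insert u A') True (k - 1)")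
            case True
            then obtain u where u: "u \<in> V' - B' - A'" and nr: "\<not> ?R B' (insert u A') True (k - 1)"
              by blast
            have uU: "u \<in> (V \<union> V') - (A \<union> A') - (B \<union> B')" using fr u by auto
            have lt: "card ((V \<union> V') - (A \<union> insert u A') - (B \<union> B')) < n"
              using card_ins_less2[OF fin uU] cn by simp
            have G': "\<forall>j<k. \<not> ?R B' (insert u A') True j"
            proof (intro allI impI notI)
              fix j assume "j < k" "?R B' (insert u A') True j"
              then have "?R B' (insert u A') True (k - 1)" using ld_mono by fastforce
              then show False using nr by blast
            qed
            have "?U (A \<union> insert u A') (B \<union> B') False"
            proof (cases "fills EL' (insert u A')")
              case True
              have "fills (EL \<union> EL') (A \<union> insert u A')" using blue[of A "insert u A'"] True AV AV' u by auto
              moreover have "\<not> fills (ER \<union> ER') (B \<union> B')" using red0 right_move by simp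
              ultimately show ?thesis by (rule lwins.base)
            next
              case False
              have "WF A B (insert u A') B'" using wf u unfolding WF_def by auto
              then have "Q2 A B (insert u A') B'" using IH[OF lt] by blast
              then show ?thesis using D G' unfolding Q2_def by blast
            qed
            then have "?U (insert u (A \<union> A')) (B \<union> B') False" by simp
            then show ?thesis
              using blue0 red0 False right_move uU by (intro lwins.left_move[where v=u]) auto
          next
            case False
            then have allu: "\<forall>u\<in>V' - B' - A'. ?R B' (insert u A') True (k - 1)" by blast
            from NP obtain j where j: "j < k - 1" and rj: "?R B' A' True j" by blast
            have ne: "V' - B' - A' \<noteq> {}"
              using rj H by (cases rule: ldelay_le.cases) auto
            have pass: "?R B' A' True (k - 1 - 1)" using ld_mono[OF rj] j by simp
            have "?R B' A' False (k - 1)"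
              using H \<open>\<not> fills EL' A'\<close> ne allu pass j
              by (intro ldelay_le.right_move) auto
            then show ?thesis using G right_move by simp
          qed
        qed
      qed
    qed simp
  qed
  show ?case using P1 P2 P3 by blast
qed


lemma main_left:
  assumes W: "lwins V EL ER {} {} True" and le: "left_delay V EL ER \<le> left_delay V' ER' EL'"
  shows "lwins (V \<union> V') (EL \<union> EL') (ER \<union> ER') {} {} True"
proof -
  have finV: "finite V" using hL by (simp add: hypergraph_def)
  obtain k0 where k0: "ldelay_le V EL ER {} {} True k0" "left_delay V EL ER = enat k0"
    using delay_attained[OF lw_delay_fin[OF finV W]] by blast
  have G: "\<forall>j<k0. \<not> ldelay_le V' ER' EL' {} {} True j"
  proof (intro allI impI notI)
    fix j assume j: "j < k0" and r: "ldelay_le V' ER' EL' {} {} True j"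
    have "left_delay V' ER' EL' \<le> enat j" by (rule delay_le[OF r])
    then have "enat k0 \<le> enat j" using le k0(2) by (metis order.trans)
    then show False using j by simp
  qed
  have H: "\<not> fills ER' {}" using hR' unfolding hypergraph_def fills_def by auto
  have wf: "WF {} {} {} {}" unfolding WF_def using H by simp
  have "Q1 {} {} {} {}" using core[OF refl wf] by blast
  then have "lwins (V \<union> V') (EL \<union> EL') (ER \<union> ER') ({} \<union> {}) ({} \<union> {}) True"
    using k0(1) G unfolding Q1_def by blast
  then show ?thesis by simp
qed

end

theorem proposition3:
  fixes V V' :: "'a set" and EL ER EL' ER' :: "'a set set"
  assumes "hypergraph V EL" and "hypergraph V ER"
    and "hypergraph V' EL'" and "hypergraph V' ER'"
    and "V \<inter> V' = {}"
    and "left_first_wins V EL ER"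
    and "right_first_wins V' EL' ER'"
  shows "(left_delay V EL ER \<le> right_delay V' EL' ER' \<longrightarrow>
            left_first_wins (V \<union> V') (EL \<union> EL') (ER \<union> ER'))
       \<and> (right_delay V' EL' ER' \<le> left_delay V EL ER \<longrightarrow>
            right_first_wins (V \<union> V') (EL \<union> EL') (ER \<union> ER'))
       \<and> (left_first_wins (V \<union> V') (EL \<union> EL') (ER \<union> ER') \<or>
          right_first_wins (V \<union> V') (EL \<union> EL') (ER \<union> ER'))"
proof -
  have L: "left_delay V EL ER \<le> right_delay V' EL' ER' \<Longrightarrow>
            left_first_wins (V \<union> V') (EL \<union> EL') (ER \<union> ER')"
  proof -
    assume a: "left_delay V EL ER \<le> right_delay V' EL' ER'"
    have w: "lwins V EL ER {} {} True" using assms(6) unfolding left_first_wins_def .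
    have a': "left_delay V EL ER \<le> left_delay V' ER' EL'" using a unfolding right_delay_def .
    show ?thesis unfolding left_first_wins_def
      by (rule main_left[OF assms(1-5) w a'])
  qed
  have R: "right_delay V' EL' ER' \<le> left_delay V EL ER \<Longrightarrow>
            right_first_wins (V \<union> V') (EL \<union> EL') (ER \<union> ER')"
  proof -
    assume a: "right_delay V' EL' ER' \<le> left_delay V EL ER"
    have w: "lwins V' ER' EL' {} {} True" using assms(7) unfolding right_first_wins_def .
    have a': "left_delay V' ER' EL' \<le> left_delay V EL ER" using a unfolding right_delay_def .
    have d: "V' \<inter> V = {}" using assms(5) by blast
    have "lwins (V' \<union> V) (ER' \<union> ER) (EL' \<union> EL) {} {} True"
      by (rule main_left[OF assms(4) assms(3) assms(2) assms(1) d w a'])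
    moreover have "V' \<union> V = V \<union> V'" "ER' \<union> ER = ER \<union> ER'" "EL' \<union> EL = EL \<union> EL'" by blast+
    ultimately show ?thesis unfolding right_first_wins_def by simp
  qed
  have "left_delay V EL ER \<le> right_delay V' EL' ER' \<or> right_delay V' EL' ER' \<le> left_delay V EL ER"
    by (rule linear)
  then show ?thesis using L R by blast
qed

end
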